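(* For every abelian category $\mathcal{A}$, the category $\widetilde{Q}\mathcal{A}$ is filtered.
   Context: For an abelian category $\mathcal{A}$, the category $\widetilde{Q}\mathcal{A}$ has the same objects as $\mathcal{A}$. A morphism $M\to M'$ is represented by a span $M\overset{p}{\twoheadleftarrow}N\overset{\iota}{\hookrightarrow}M'$ with $p$ an epimorphism and $\iota$ a monomorphism; two spans $(p_f,\iota_f)$ via $N$ and $(p_g,\iota_g)$ via $N'$ represent the same morphism if they are related by the equivalence relation generated by: $f\sim g$ whenever there is a monomorphism $j:N\hookrightarrow N'$ with $p_g\circ j=p_f$ and $\iota_g\circ j=\iota_f$ (in particular isomorphic spans are identified). Composition is induced by composing spans via fiber products (as in Quillen's Q-construction). *)

theory Defs
  imports Main
begin

text \<open>Categories given by explicit carriers (objects of type 'o, arrows of type 'm).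
  Comp g f is the composite "g after f".\<close>

record ('o,'m) cat =
  Obj  :: "'o set"
  Arr  :: "'m set"
  Dom  :: "'m \<Rightarrow> 'o"
  Cod  :: "'m \<Rightarrow> 'o"
  Id   :: "'o \<Rightarrow> 'm"
  Comp :: "'m \<Rightarrow> 'm \<Rightarrow> 'm"

definition category :: "('o,'m) cat \<Rightarrow> bool" where
  "category C \<longleftrightarrow>
     (\<forall>f\<in>Arr C. Dom C f \<in> Obj C \<and> Cod C f \<in> Obj C) \<and>
     (\<forall>A\<in>Obj C. Id C A \<in> Arr C \<and> Dom C (Id C A) = A \<and> Cod C (Id C A) = A) \<and>
     (\<forall>f\<in>Arr C. \<forall>g\<in>Arr C. Cod C f = Dom C g \<longrightarrow>
         Comp C g f \<in> Arr C \<and> Dom C (Comp C g f) = Dom C f \<and> Cod C (Comp C g f) = Cod C g) \<and>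
     (\<forall>f\<in>Arr C. \<forall>g\<in>Arr C. \<forall>h\<in>Arr C. Cod C f = Dom C g \<longrightarrow> Cod C g = Dom C h \<longrightarrow>
         Comp C h (Comp C g f) = Comp C (Comp C h g) f) \<and>
     (\<forall>f\<in>Arr C. Comp C (Id C (Cod C f)) f = f \<and> Comp C f (Id C (Dom C f)) = f)"

definition hom :: "('o,'m) cat \<Rightarrow> 'o \<Rightarrow> 'o \<Rightarrow> 'm set" where
  "hom C A B = {f \<in> Arr C. Dom C f = A \<and> Cod C f = B}"

definition mono :: "('o,'m) cat \<Rightarrow> 'm \<Rightarrow> bool" where
  "mono C m \<longleftrightarrow> m \<in> Arr C \<and>
     (\<forall>g\<in>Arr C. \<forall>h\<in>Arr C. Cod C g = Dom C m \<longrightarrow> Cod C h = Dom C m \<longrightarrow> Dom C g = Dom C h \<longrightarrow>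
        Comp C m g = Comp C m h \<longrightarrow> g = h)"

definition epi :: "('o,'m) cat \<Rightarrow> 'm \<Rightarrow> bool" where
  "epi C e \<longleftrightarrow> e \<in> Arr C \<and>
     (\<forall>g\<in>Arr C. \<forall>h\<in>Arr C. Dom C g = Cod C e \<longrightarrow> Dom C h = Cod C e \<longrightarrow> Cod C g = Cod C h \<longrightarrow>
        Comp C g e = Comp C h e \<longrightarrow> g = h)"

definition zero_obj :: "('o,'m) cat \<Rightarrow> 'o \<Rightarrow> bool" where
  "zero_obj C z \<longleftrightarrow> z \<in> Obj C \<and>
     (\<forall>A\<in>Obj C. (\<exists>!f. f \<in> hom C A z) \<and> (\<exists>!f. f \<in> hom C z A))"

definition zero_arr :: "('o,'m) cat \<Rightarrow> 'm \<Rightarrow> bool" where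
  "zero_arr C f \<longleftrightarrow> f \<in> Arr C \<and>
     (\<exists>z. zero_obj C z \<and> (\<exists>g h. g \<in> hom C (Dom C f) z \<and> h \<in> hom C z (Cod C f) \<and> f = Comp C h g))"

definition is_product :: "('o,'m) cat \<Rightarrow> 'o \<Rightarrow> 'o \<Rightarrow> 'o \<Rightarrow> 'm \<Rightarrow> 'm \<Rightarrow> bool" where
  "is_product C A B P p1 p2 \<longleftrightarrow> P \<in> Obj C \<and> p1 \<in> hom C P A \<and> p2 \<in> hom C P B \<and>
     (\<forall>X\<in>Obj C. \<forall>f1\<in>hom C X A. \<forall>f2\<in>hom C X B.
        \<exists>!u. u \<in> hom C X P \<and> Comp C p1 u = f1 \<and> Comp C p2 u = f2)"

definition is_coproduct :: "('o,'m) cat \<Rightarrow> 'o \<Rightarrow> 'o \<Rightarrow> 'o \<Rightarrow> 'm \<Rightarrow> 'm \<Rightarrow> bool" where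
  "is_coproduct C A B S i1 i2 \<longleftrightarrow> S \<in> Obj C \<and> i1 \<in> hom C A S \<and> i2 \<in> hom C B S \<and>
     (\<forall>X\<in>Obj C. \<forall>f1\<in>hom C A X. \<forall>f2\<in>hom C B X.
        \<exists>!u. u \<in> hom C S X \<and> Comp C u i1 = f1 \<and> Comp C u i2 = f2)"

definition is_kernel :: "('o,'m) cat \<Rightarrow> 'm \<Rightarrow> 'm \<Rightarrow> bool" where
  "is_kernel C f k \<longleftrightarrow> f \<in> Arr C \<and> k \<in> Arr C \<and> Cod C k = Dom C f \<and> zero_arr C (Comp C f k) \<and>
     (\<forall>k'\<in>Arr C. Cod C k' = Dom C f \<longrightarrow> zero_arr C (Comp C f k') \<longrightarrow>
        (\<exists>!u. u \<in> hom C (Dom C k') (Dom C k) \<and> Comp C k u = k'))"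

definition is_cokernel :: "('o,'m) cat \<Rightarrow> 'm \<Rightarrow> 'm \<Rightarrow> bool" where
  "is_cokernel C f c \<longleftrightarrow> f \<in> Arr C \<and> c \<in> Arr C \<and> Dom C c = Cod C f \<and> zero_arr C (Comp C c f) \<and>
     (\<forall>c'\<in>Arr C. Dom C c' = Cod C f \<longrightarrow> zero_arr C (Comp C c' f) \<longrightarrow>
        (\<exists>!u. u \<in> hom C (Cod C c) (Cod C c') \<and> Comp C u c = c'))"

definition abelian :: "('o,'m) cat \<Rightarrow> bool" where
  "abelian C \<longleftrightarrow> category C \<and>
     (\<exists>z. zero_obj C z) \<and>
     (\<forall>A\<in>Obj C. \<forall>B\<in>Obj C. \<exists>P p1 p2. is_product C A B P p1 p2) \<and>
     (\<forall>A\<in>Obj C. \<forall>B\<in>Obj C. \<exists>S i1 i2. is_coproduct C A B S i1 i2) \<and>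
     (\<forall>f\<in>Arr C. \<exists>k. is_kernel C f k) \<and>
     (\<forall>f\<in>Arr C. \<exists>c. is_cokernel C f c) \<and>
     (\<forall>m. mono C m \<longrightarrow> (\<exists>f. is_kernel C f m)) \<and>
     (\<forall>e. epi C e \<longrightarrow> (\<exists>f. is_cokernel C f e))"

text \<open>A span (N, p, i) represents M <<-p- N >->i M'.\<close>
type_synonym ('o,'m) span = "'o \<times> 'm \<times> 'm"

definition valid_span :: "('o,'m) cat \<Rightarrow> 'o \<Rightarrow> 'o \<Rightarrow> ('o,'m) span \<Rightarrow> bool" where
  "valid_span C M M' s \<longleftrightarrow> (case s of (N, p, i) \<Rightarrow>
     N \<in> Obj C \<and> p \<in> hom C N M \<and> epi C p \<and> i \<in> hom C N M' \<and> mono C i)"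

definition span_step :: "('o,'m) cat \<Rightarrow> ('o,'m) span \<Rightarrow> ('o,'m) span \<Rightarrow> bool" where
  "span_step C s t \<longleftrightarrow> (case s of (N, pf, jf) \<Rightarrow> case t of (N', pg, jg) \<Rightarrow>
     (\<exists>j\<in>hom C N N'. mono C j \<and> Comp C pg j = pf \<and> Comp C jg j = jf))"

definition span_equiv :: "('o,'m) cat \<Rightarrow> 'o \<Rightarrow> 'o \<Rightarrow> ('o,'m) span \<Rightarrow> ('o,'m) span \<Rightarrow> bool" where
  "span_equiv C M M' = (\<lambda>s t. valid_span C M M' s \<and> valid_span C M M' t \<and>
                                (span_step C s t \<or> span_step C t s))\<^sup>*\<^sup>*"

definition span_class :: "('o,'m) cat \<Rightarrow> 'o \<Rightarrow> 'o \<Rightarrow> ('o,'m) span \<Rightarrow> ('o,'m) span set" where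
  "span_class C M M' s = {t. valid_span C M M' t \<and> span_equiv C M M' s t}"

text \<open>Morphisms M -> M' of Q~A: equivalence classes of valid spans.\<close>
definition Qhom :: "('o,'m) cat \<Rightarrow> 'o \<Rightarrow> 'o \<Rightarrow> ('o,'m) span set set" where
  "Qhom C M M' = {span_class C M M' s | s. valid_span C M M' s}"

definition is_pullback :: "('o,'m) cat \<Rightarrow> 'm \<Rightarrow> 'm \<Rightarrow> 'o \<Rightarrow> 'm \<Rightarrow> 'm \<Rightarrow> bool" where
  "is_pullback C f g P a b \<longleftrightarrow> P \<in> Obj C \<and> a \<in> hom C P (Dom C f) \<and> b \<in> hom C P (Dom C g) \<and>
     Comp C f a = Comp C g b \<and>
     (\<forall>X\<in>Obj C. \<forall>a'\<in>hom C X (Dom C f). \<forall>b'\<in>hom C X (Dom C g). Comp C f a' = Comp C g b' \<longrightarrow>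
        (\<exists>!u. u \<in> hom C X P \<and> Comp C a u = a' \<and> Comp C b u = b'))"

definition span_comps :: "('o,'m) cat \<Rightarrow> ('o,'m) span \<Rightarrow> ('o,'m) span \<Rightarrow> ('o,'m) span set" where
  "span_comps C s t = (case s of (N, p, i) \<Rightarrow> case t of (K, q, k) \<Rightarrow>
     {(P, Comp C p a, Comp C k b) | P a b. is_pullback C i q P a b})"

text \<open>Composition in Q~A of G : M' -> M'' after F : M -> M'.\<close>
definition Qcomp :: "('o,'m) cat \<Rightarrow> 'o \<Rightarrow> 'o \<Rightarrow> 'o \<Rightarrow> ('o,'m) span set \<Rightarrow> ('o,'m) span set \<Rightarrow> ('o,'m) span set" where
  "Qcomp C M M' M'' G F =
     {u. \<exists>f\<in>F. \<exists>g\<in>G. \<exists>s\<in>span_comps C f g. u \<in> span_class C M M'' s}"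

definition Q_filtered :: "('o,'m) cat \<Rightarrow> bool" where
  "Q_filtered C \<longleftrightarrow> Obj C \<noteq> {} \<and>
     (\<forall>X\<in>Obj C. \<forall>Y\<in>Obj C. \<exists>Z\<in>Obj C. Qhom C X Z \<noteq> {} \<and> Qhom C Y Z \<noteq> {}) \<and>
     (\<forall>X\<in>Obj C. \<forall>Y\<in>Obj C. \<forall>F\<in>Qhom C X Y. \<forall>G\<in>Qhom C X Y.
        \<exists>Z\<in>Obj C. \<exists>H\<in>Qhom C Y Z. Qcomp C X Y Z H F = Qcomp C X Y Z H G)"

end

theory Submission
  imports Defs
begin


locale ab =
  fixes C :: "('o,'m) cat"
  assumes abel: "abelian C"
begin

abbreviation cp (infixr "\<cdot>" 55) where "g \<cdot> f \<equiv> Comp C g f"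

lemma cat: "category C" using abel by (simp add: abelian_def)

lemma dom_obj[intro]: "f \<in> Arr C \<Longrightarrow> Dom C f \<in> Obj C" using cat by (simp add: category_def)
lemma cod_obj[intro]: "f \<in> Arr C \<Longrightarrow> Cod C f \<in> Obj C" using cat by (simp add: category_def)
lemma id_arr[simp]: "A \<in> Obj C \<Longrightarrow> Id C A \<in> Arr C" using cat by (simp add: category_def)
lemma id_dom[simp]: "A \<in> Obj C \<Longrightarrow> Dom C (Id C A) = A" using cat by (simp add: category_def)
lemma id_cod[simp]: "A \<in> Obj C \<Longrightarrow> Cod C (Id C A) = A" using cat by (simp add: category_def)
lemma comp_arr[simp]: "f \<in> Arr C \<Longrightarrow> g \<in> Arr C \<Longrightarrow> Cod C f = Dom C g \<Longrightarrow> g \<cdot> f \<in> Arr C"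
  using cat by (simp add: category_def)
lemma comp_dom[simp]: "f \<in> Arr C \<Longrightarrow> g \<in> Arr C \<Longrightarrow> Cod C f = Dom C g \<Longrightarrow> Dom C (g \<cdot> f) = Dom C f"
  using cat by (simp add: category_def)
lemma comp_cod[simp]: "f \<in> Arr C \<Longrightarrow> g \<in> Arr C \<Longrightarrow> Cod C f = Dom C g \<Longrightarrow> Cod C (g \<cdot> f) = Cod C g"
  using cat by (simp add: category_def)
lemma assoc: "f \<in> Arr C \<Longrightarrow> g \<in> Arr C \<Longrightarrow> h \<in> Arr C \<Longrightarrow> Cod C f = Dom C g \<Longrightarrow> Cod C g = Dom C h \<Longrightarrow>
   h \<cdot> (g \<cdot> f) = (h \<cdot> g) \<cdot> f"
  using cat unfolding category_def by blast
lemma id_l[simp]: "f \<in> Arr C \<Longrightarrow> Id C (Cod C f) \<cdot> f = f" using cat by (simp add: category_def)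
lemma id_r[simp]: "f \<in> Arr C \<Longrightarrow> f \<cdot> Id C (Dom C f) = f" using cat by (simp add: category_def)

lemma hom_iff[simp]: "f \<in> hom C A B \<longleftrightarrow> f \<in> Arr C \<and> Dom C f = A \<and> Cod C f = B"
  by (simp add: hom_def)

lemma id_l'[simp]: "f \<in> Arr C \<Longrightarrow> Cod C f = B \<Longrightarrow> Id C B \<cdot> f = f" by auto
lemma id_r'[simp]: "f \<in> Arr C \<Longrightarrow> Dom C f = B \<Longrightarrow> f \<cdot> Id C B = f" by auto

lemma mono_cancel: "mono C m \<Longrightarrow> g \<in> Arr C \<Longrightarrow> h \<in> Arr C \<Longrightarrow> Cod C g = Dom C m \<Longrightarrow> Cod C h = Dom C m
   \<Longrightarrow> Dom C g = Dom C h \<Longrightarrow> m \<cdot> g = m \<cdot> h \<Longrightarrow> g = h"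
  unfolding mono_def by blast
lemma epi_cancel: "epi C e \<Longrightarrow> g \<in> Arr C \<Longrightarrow> h \<in> Arr C \<Longrightarrow> Dom C g = Cod C e \<Longrightarrow> Dom C h = Cod C e
   \<Longrightarrow> Cod C g = Cod C h \<Longrightarrow> g \<cdot> e = h \<cdot> e \<Longrightarrow> g = h"
  unfolding epi_def by blast
lemma mono_arr: "mono C m \<Longrightarrow> m \<in> Arr C" by (simp add: mono_def)
lemma epi_arr: "epi C m \<Longrightarrow> m \<in> Arr C" by (simp add: epi_def)

lemma mono_comp: assumes "mono C m" "mono C n" "Cod C m = Dom C n" shows "mono C (n \<cdot> m)"
proof -
  have a: "m \<in> Arr C" "n \<in> Arr C" using assms mono_arr by auto
  show ?thesis unfolding mono_def
  proof (intro conjI ballI impI)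
    show "n \<cdot> m \<in> Arr C" using a assms by simp
    fix g h assume g: "g \<in> Arr C" "h \<in> Arr C" "Cod C g = Dom C (n \<cdot> m)" "Cod C h = Dom C (n \<cdot> m)"
      "Dom C g = Dom C h" "(n \<cdot> m) \<cdot> g = (n \<cdot> m) \<cdot> h"
    hence "n \<cdot> (m \<cdot> g) = n \<cdot> (m \<cdot> h)" using a assms by (simp add: assoc)
    hence "m \<cdot> g = m \<cdot> h" using mono_cancel[OF assms(2)] a g assms by simp
    thus "g = h" using mono_cancel[OF assms(1)] a g assms by simp
  qed
qed

lemma epi_comp: assumes "epi C e" "epi C d" "Cod C e = Dom C d" shows "epi C (d \<cdot> e)"
proof -
  have a: "e \<in> Arr C" "d \<in> Arr C" using assms epi_arr by auto
  show ?thesis unfolding epi_def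
  proof (intro conjI ballI impI)
    show "d \<cdot> e \<in> Arr C" using a assms by simp
    fix g h assume g: "g \<in> Arr C" "h \<in> Arr C" "Dom C g = Cod C (d \<cdot> e)" "Dom C h = Cod C (d \<cdot> e)"
      "Cod C g = Cod C h" "g \<cdot> (d \<cdot> e) = h \<cdot> (d \<cdot> e)"
    hence "(g \<cdot> d) \<cdot> e = (h \<cdot> d) \<cdot> e" using a assms by (simp add: assoc)
    hence "g \<cdot> d = h \<cdot> d" using epi_cancel[OF assms(1)] a g assms by simp
    thus "g = h" using epi_cancel[OF assms(2)] a g assms by simp
  qed
qed

lemma split_mono: assumes "m \<in> Arr C" "r \<in> Arr C" "Cod C m = Dom C r" "r \<cdot> m = Id C (Dom C m)"
  shows "mono C m"
  unfolding mono_def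
proof (intro conjI ballI impI)
  show "m \<in> Arr C" by fact
  fix g h assume g: "g \<in> Arr C" "h \<in> Arr C" "Cod C g = Dom C m" "Cod C h = Dom C m"
      "Dom C g = Dom C h" "m \<cdot> g = m \<cdot> h"
  have "g = (r \<cdot> m) \<cdot> g" using assms(4) g(1,3) id_l[of g] by metis
  also have "\<dots> = r \<cdot> (m \<cdot> g)" using assoc[of g m r] assms(1-3) g(1,3) by metis
  also have "\<dots> = r \<cdot> (m \<cdot> h)" using g by simp
  also have "\<dots> = (r \<cdot> m) \<cdot> h" using assoc[of h m r] assms(1-3) g(2,4) by metis
  also have "\<dots> = h" using assms(4) g(2,4) id_l[of h] by metis
  finally show "g = h" .
qed

lemma split_epi: assumes "e \<in> Arr C" "s \<in> Arr C" "Cod C s = Dom C e" "e \<cdot> s = Id C (Cod C e)"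
  shows "epi C e"
  unfolding epi_def
proof (intro conjI ballI impI)
  show "e \<in> Arr C" by fact
  fix g h assume g: "g \<in> Arr C" "h \<in> Arr C" "Dom C g = Cod C e" "Dom C h = Cod C e"
      "Cod C g = Cod C h" "g \<cdot> e = h \<cdot> e"
  have "g = g \<cdot> (e \<cdot> s)" using assms(4) g(1,3) id_r[of g] by metis
  also have "\<dots> = (g \<cdot> e) \<cdot> s" using assoc[of s e g] assms(1-3) g(1,3) by metis
  also have "\<dots> = (h \<cdot> e) \<cdot> s" using g by simp
  also have "\<dots> = h \<cdot> (e \<cdot> s)" using assoc[of s e h] assms(1-3) g(2,4) by metis
  also have "\<dots> = h" using assms(4) g(2,4) id_r[of h] by metis
  finally show "g = h" .
qed

lemma mono_factor: assumes "mono C (n \<cdot> m)" "m \<in> Arr C" "n \<in> Arr C" "Cod C m = Dom C n" shows "mono C m"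
  unfolding mono_def
proof (intro conjI ballI impI)
  show "m \<in> Arr C" by fact
  fix g h assume g: "g \<in> Arr C" "h \<in> Arr C" "Cod C g = Dom C m" "Cod C h = Dom C m"
      "Dom C g = Dom C h" "m \<cdot> g = m \<cdot> h"
  hence "(n \<cdot> m) \<cdot> g = (n \<cdot> m) \<cdot> h" using assms by (simp add: assoc[symmetric])
  thus "g = h" using mono_cancel[OF assms(1)] assms g by simp
qed

lemma epi_factor: assumes "epi C (e \<cdot> d)" "e \<in> Arr C" "d \<in> Arr C" "Cod C d = Dom C e" shows "epi C e"
  unfolding epi_def
proof (intro conjI ballI impI)
  show "e \<in> Arr C" by fact
  fix g h assume g: "g \<in> Arr C" "h \<in> Arr C" "Dom C g = Cod C e" "Dom C h = Cod C e"
      "Cod C g = Cod C h" "g \<cdot> e = h \<cdot> e"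
  hence "g \<cdot> (e \<cdot> d) = h \<cdot> (e \<cdot> d)" using assms by (simp add: assoc)
  thus "g = h" using epi_cancel[OF assms(1)] assms g by simp
qed

lemma id_mono: "A \<in> Obj C \<Longrightarrow> mono C (Id C A)" by (rule split_mono[of _ "Id C A"]) auto
lemma id_epi: "A \<in> Obj C \<Longrightarrow> epi C (Id C A)" by (rule split_epi[of _ "Id C A"]) auto

end


context ab begin

lemma zobj: "\<exists>z. zero_obj C z" using abel by (simp add: abelian_def)

lemma zero_obj_obj: "zero_obj C z \<Longrightarrow> z \<in> Obj C" by (simp add: zero_obj_def)

lemma zero_arr_arr: "zero_arr C f \<Longrightarrow> f \<in> Arr C" by (simp add: zero_arr_def)

lemma zero_comp_l: assumes "zero_arr C f" "g \<in> Arr C" "Cod C f = Dom C g" shows "zero_arr C (g \<cdot> f)"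
proof -
  obtain z a b where z: "zero_obj C z" "a \<in> hom C (Dom C f) z" "b \<in> hom C z (Cod C f)" and fe: "f = b \<cdot> a"
    using assms(1) unfolding zero_arr_def by blast
  have f: "f \<in> Arr C" using assms(1) zero_arr_arr by blast
  have ab: "a \<in> Arr C" "b \<in> Arr C" "Cod C a = z" "Dom C b = z" "Dom C a = Dom C f" "Cod C b = Cod C f"
    using z by auto
  have e: "g \<cdot> f = (g \<cdot> b) \<cdot> a" unfolding fe using assoc[of a b g] ab assms(2,3) by simp
  have gf: "g \<cdot> f \<in> Arr C" "Dom C (g \<cdot> f) = Dom C f" "Cod C (g \<cdot> f) = Cod C g" using f assms by auto
  have 1: "g \<cdot> b \<in> hom C z (Cod C (g \<cdot> f))" using ab assms gf by simp
  have 2: "a \<in> hom C (Dom C (g \<cdot> f)) z" using ab gf by simp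
  show ?thesis unfolding zero_arr_def using z(1) 1 2 e gf(1) by blast
qed

lemma zero_comp_r: assumes "zero_arr C f" "h \<in> Arr C" "Cod C h = Dom C f" shows "zero_arr C (f \<cdot> h)"
proof -
  obtain z a b where z: "zero_obj C z" "a \<in> hom C (Dom C f) z" "b \<in> hom C z (Cod C f)" and fe: "f = b \<cdot> a"
    using assms(1) unfolding zero_arr_def by blast
  have f: "f \<in> Arr C" using assms(1) zero_arr_arr by blast
  have ab: "a \<in> Arr C" "b \<in> Arr C" "Cod C a = z" "Dom C b = z" "Dom C a = Dom C f" "Cod C b = Cod C f"
    using z by auto
  have e: "f \<cdot> h = b \<cdot> (a \<cdot> h)" unfolding fe using assoc[of h a b] ab assms(2,3) by simp
  have gf: "f \<cdot> h \<in> Arr C" "Dom C (f \<cdot> h) = Dom C h" "Cod C (f \<cdot> h) = Cod C f" using f assms by auto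
  have 1: "b \<in> hom C z (Cod C (f \<cdot> h))" using ab gf by simp
  have 2: "a \<cdot> h \<in> hom C (Dom C (f \<cdot> h)) z" using ab gf assms by simp
  show ?thesis unfolding zero_arr_def using z(1) 1 2 e gf(1) by blast
qed

lemma zobj_to_unique: assumes "zero_obj C z" "f \<in> hom C A z" "g \<in> hom C A z" shows "f = g"
proof -
  have "A \<in> Obj C" using assms(2) dom_obj by auto
  hence "\<exists>!f. f \<in> hom C A z" using assms(1) unfolding zero_obj_def by blast
  thus ?thesis using assms(2,3) by blast
qed

lemma zobj_from_unique: assumes "zero_obj C z" "f \<in> hom C z A" "g \<in> hom C z A" shows "f = g"
proof -
  have "A \<in> Obj C" using assms(2) cod_obj by auto
  hence "\<exists>!f. f \<in> hom C z A" using assms(1) unfolding zero_obj_def by blast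
  thus ?thesis using assms(2,3) by blast
qed

lemma zobj_to_ex: assumes "zero_obj C z" "A \<in> Obj C" shows "\<exists>f. f \<in> hom C A z"
proof -
  have "\<exists>!f. f \<in> hom C A z" using assms unfolding zero_obj_def by blast
  thus ?thesis by (rule ex1_implies_ex)
qed

lemma zobj_from_ex: assumes "zero_obj C z" "A \<in> Obj C" shows "\<exists>f. f \<in> hom C z A"
proof -
  have "\<exists>!f. f \<in> hom C z A" using assms unfolding zero_obj_def by blast
  thus ?thesis by (rule ex1_implies_ex)
qed

lemma zero_unique: assumes "zero_arr C f" "zero_arr C g" "Dom C f = Dom C g" "Cod C f = Cod C g"
  shows "f = g"
proof -
  obtain z a b where z: "zero_obj C z" "a \<in> hom C (Dom C f) z" "b \<in> hom C z (Cod C f)" and fe: "f = b \<cdot> a"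
    using assms(1) unfolding zero_arr_def by blast
  obtain z' a' b' where z': "zero_obj C z'" "a' \<in> hom C (Dom C g) z'" "b' \<in> hom C z' (Cod C g)" and ge: "g = b' \<cdot> a'"
    using assms(2) unfolding zero_arr_def by blast
  obtain w where w: "w \<in> hom C z' z" using zobj_to_ex[OF z(1) zero_obj_obj[OF z'(1)]] by blast
  have wa: "w \<cdot> a' \<in> hom C (Dom C f) z" using w z' assms(3) by simp
  have 1: "w \<cdot> a' = a" by (rule zobj_to_unique[OF z(1) wa z(2)])
  have bw: "b \<cdot> w \<in> hom C z' (Cod C f)" using w z by simp
  have 2: "b \<cdot> w = b'" using zobj_from_unique[OF z'(1) bw] z'(3) assms(4) by simp
  have "f = b \<cdot> (w \<cdot> a')" using 1 fe by simp
  also have "\<dots> = (b \<cdot> w) \<cdot> a'" using w z z' assoc[of a' w b] by simp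
  finally show ?thesis using 2 ge by simp
qed

lemma zero_ex: assumes "A \<in> Obj C" "B \<in> Obj C" shows "\<exists>f. zero_arr C f \<and> f \<in> hom C A B"
proof -
  obtain z where z: "zero_obj C z" using zobj by blast
  obtain a b where ab: "a \<in> hom C A z" "b \<in> hom C z B" using zobj_to_ex[OF z assms(1)] zobj_from_ex[OF z assms(2)] by blast
  have ba: "b \<cdot> a \<in> Arr C" "Dom C (b \<cdot> a) = A" "Cod C (b \<cdot> a) = B" using ab by auto
  have "zero_arr C (b \<cdot> a)" unfolding zero_arr_def using z ab ba by blast
  thus ?thesis using ba by auto
qed

definition zr where "zr A B = (SOME f. zero_arr C f \<and> f \<in> hom C A B)"

lemma zr: "A \<in> Obj C \<Longrightarrow> B \<in> Obj C \<Longrightarrow> zero_arr C (zr A B) \<and> zr A B \<in> hom C A B"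
  unfolding zr_def by (rule someI_ex) (rule zero_ex)

lemma zr_simps[simp]: "A \<in> Obj C \<Longrightarrow> B \<in> Obj C \<Longrightarrow> zr A B \<in> Arr C"
   "A \<in> Obj C \<Longrightarrow> B \<in> Obj C \<Longrightarrow> Dom C (zr A B) = A"
   "A \<in> Obj C \<Longrightarrow> B \<in> Obj C \<Longrightarrow> Cod C (zr A B) = B"
  using zr by auto

lemma zr_zero: "A \<in> Obj C \<Longrightarrow> B \<in> Obj C \<Longrightarrow> zero_arr C (zr A B)" using zr by auto

lemma is_zr: assumes "zero_arr C f" shows "f = zr (Dom C f) (Cod C f)"
proof -
  have "Dom C f \<in> Obj C" "Cod C f \<in> Obj C" using assms zero_arr_arr by auto
  thus ?thesis using zero_unique[OF assms zr_zero] by simp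
qed

lemma ker_ex: "f \<in> Arr C \<Longrightarrow> \<exists>k. is_kernel C f k" using abel by (simp add: abelian_def)
lemma coker_ex: "f \<in> Arr C \<Longrightarrow> \<exists>c. is_cokernel C f c" using abel by (simp add: abelian_def)
lemma mono_is_ker: "mono C m \<Longrightarrow> \<exists>f. is_kernel C f m" using abel by (simp add: abelian_def)
lemma epi_is_coker: "epi C e \<Longrightarrow> \<exists>f. is_cokernel C f e" using abel by (simp add: abelian_def)

lemma kernel_factor: assumes "is_kernel C f k" "t \<in> Arr C" "Cod C t = Dom C f" "zero_arr C (f \<cdot> t)"
  shows "\<exists>u. u \<in> hom C (Dom C t) (Dom C k) \<and> k \<cdot> u = t"
  using assms unfolding is_kernel_def by blast

lemma kernel_basic: assumes "is_kernel C f k"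
  shows "f \<in> Arr C" "k \<in> Arr C" "Cod C k = Dom C f" "zero_arr C (f \<cdot> k)"
  using assms unfolding is_kernel_def by auto

lemma cokernel_factor: assumes "is_cokernel C f c" "t \<in> Arr C" "Dom C t = Cod C f" "zero_arr C (t \<cdot> f)"
  shows "\<exists>u. u \<in> hom C (Cod C c) (Cod C t) \<and> u \<cdot> c = t"
  using assms unfolding is_cokernel_def by blast

lemma cokernel_basic: assumes "is_cokernel C f c"
  shows "f \<in> Arr C" "c \<in> Arr C" "Dom C c = Cod C f" "zero_arr C (c \<cdot> f)"
  using assms unfolding is_cokernel_def by auto

lemma kernel_mono: assumes "is_kernel C f k" shows "mono C k"
  unfolding mono_def
proof (intro conjI ballI impI)
  note kb = kernel_basic[OF assms]
  show "k \<in> Arr C" by (rule kb)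
  fix g h assume g: "g \<in> Arr C" "h \<in> Arr C" "Cod C g = Dom C k" "Cod C h = Dom C k"
      "Dom C g = Dom C h" "k \<cdot> g = k \<cdot> h"
  let ?t = "k \<cdot> g"
  have t: "?t \<in> Arr C" "Cod C ?t = Dom C f" using g kb by auto
  have "f \<cdot> ?t = (f \<cdot> k) \<cdot> g" using assoc[of g k f] g kb by auto
  hence z: "zero_arr C (f \<cdot> ?t)" using zero_comp_r[OF kb(4), of g] g kb by auto
  have "\<exists>!u. u \<in> hom C (Dom C ?t) (Dom C k) \<and> k \<cdot> u = ?t"
    using assms t z unfolding is_kernel_def by blast
  thus "g = h" using g kb by auto
qed

lemma cokernel_epi: assumes "is_cokernel C f c" shows "epi C c"
  unfolding epi_def
proof (intro conjI ballI impI)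
  note kb = cokernel_basic[OF assms]
  show "c \<in> Arr C" by (rule kb)
  fix g h assume g: "g \<in> Arr C" "h \<in> Arr C" "Dom C g = Cod C c" "Dom C h = Cod C c"
      "Cod C g = Cod C h" "g \<cdot> c = h \<cdot> c"
  let ?t = "g \<cdot> c"
  have t: "?t \<in> Arr C" "Dom C ?t = Cod C f" using g kb by auto
  have "?t \<cdot> f = g \<cdot> (c \<cdot> f)" using assoc[of f c g] g kb by auto
  hence z: "zero_arr C (?t \<cdot> f)" using zero_comp_l[OF kb(4), of g] g kb by auto
  have "\<exists>!u. u \<in> hom C (Cod C c) (Cod C ?t) \<and> u \<cdot> c = ?t"
    using assms t z unfolding is_cokernel_def by blast
  thus "g = h" using g kb by auto
qed

lemma mono_normal: assumes "mono C m" "is_cokernel C m c" shows "is_kernel C c m"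
proof -
  obtain f where f: "is_kernel C f m" using mono_is_ker assms by blast
  note fb = kernel_basic[OF f] and cb = cokernel_basic[OF assms(2)]
  obtain v where v: "v \<in> hom C (Cod C c) (Cod C f)" "v \<cdot> c = f"
    using cokernel_factor[OF assms(2) fb(1)] fb by auto
  show ?thesis unfolding is_kernel_def
  proof (intro conjI ballI impI)
    show "c \<in> Arr C" "m \<in> Arr C" "Cod C m = Dom C c" "zero_arr C (c \<cdot> m)" using cb by auto
    fix k' assume k': "k' \<in> Arr C" "Cod C k' = Dom C c" "zero_arr C (c \<cdot> k')"
    have "f \<cdot> k' = v \<cdot> (c \<cdot> k')" using assoc[of k' c v] v k' cb by auto
    hence "zero_arr C (f \<cdot> k')" using zero_comp_l[OF k'(3), of v] v k' cb by auto
    moreover have "Cod C k' = Dom C f" using k' cb fb by auto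
    ultimately show "\<exists>!u. u \<in> hom C (Dom C k') (Dom C m) \<and> m \<cdot> u = k'"
      using f k' unfolding is_kernel_def by blast
  qed
qed

lemma epi_conormal: assumes "epi C e" "is_kernel C e k" shows "is_cokernel C k e"
proof -
  obtain f where f: "is_cokernel C f e" using epi_is_coker assms by blast
  note fb = cokernel_basic[OF f] and kb = kernel_basic[OF assms(2)]
  obtain v where v: "v \<in> hom C (Dom C f) (Dom C k)" "k \<cdot> v = f"
    using kernel_factor[OF assms(2) fb(1)] fb by auto
  show ?thesis unfolding is_cokernel_def
  proof (intro conjI ballI impI)
    show "k \<in> Arr C" "e \<in> Arr C" "Dom C e = Cod C k" "zero_arr C (e \<cdot> k)" using kb by auto
    fix c' assume c': "c' \<in> Arr C" "Dom C c' = Cod C k" "zero_arr C (c' \<cdot> k)"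
    have "c' \<cdot> f = (c' \<cdot> k) \<cdot> v" using assoc[of v k c'] v c' kb by auto
    hence "zero_arr C (c' \<cdot> f)" using zero_comp_r[OF c'(3), of v] v c' kb by auto
    moreover have "Dom C c' = Cod C f" using c' kb fb by auto
    ultimately show "\<exists>!u. u \<in> hom C (Cod C e) (Cod C c') \<and> u \<cdot> e = c'"
      using f c' unfolding is_cokernel_def by blast
  qed
qed

lemma mono_ker_coker: assumes "mono C m" shows "\<exists>c. is_cokernel C m c \<and> is_kernel C c m"
  using coker_ex[OF mono_arr[OF assms]] mono_normal[OF assms] by blast

end


context ab begin

lemma comp_hom: "f \<in> hom C A B \<Longrightarrow> g \<in> hom C B D \<Longrightarrow> g \<cdot> f \<in> hom C A D" by simp
lemma as: "f \<in> hom C A B \<Longrightarrow> g \<in> hom C B D \<Longrightarrow> h \<in> hom C D E \<Longrightarrow> h \<cdot> (g \<cdot> f) = (h \<cdot> g) \<cdot> f"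
  by (rule assoc) auto
lemma idh: "A \<in> Obj C \<Longrightarrow> Id C A \<in> hom C A A" by simp
lemma idl: "f \<in> hom C A B \<Longrightarrow> Id C B \<cdot> f = f" by simp
lemma idr: "f \<in> hom C A B \<Longrightarrow> f \<cdot> Id C A = f" by simp

lemma prod_ex: "A \<in> Obj C \<Longrightarrow> B \<in> Obj C \<Longrightarrow> \<exists>P p1 p2. is_product C A B P p1 p2"
  using abel by (simp add: abelian_def)

lemma prod_basic: assumes "is_product C A B P p1 p2"
  shows "P \<in> Obj C" "p1 \<in> hom C P A" "p2 \<in> hom C P B"
  using assms unfolding is_product_def by auto

lemma prod_tup: assumes "is_product C A B P p1 p2" "f \<in> hom C X A" "g \<in> hom C X B"
  shows "\<exists>u. u \<in> hom C X P \<and> p1 \<cdot> u = f \<and> p2 \<cdot> u = g"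
proof -
  have X: "X \<in> Obj C" using assms(2) dom_obj by auto
  have "\<forall>X\<in>Obj C. \<forall>f1\<in>hom C X A. \<forall>f2\<in>hom C X B. \<exists>!u. u \<in> hom C X P \<and> p1 \<cdot> u = f1 \<and> p2 \<cdot> u = f2"
    using assms(1) unfolding is_product_def by (elim conjE)
  hence "\<exists>!u. u \<in> hom C X P \<and> p1 \<cdot> u = f \<and> p2 \<cdot> u = g" using X assms(2,3) by (elim ballE) auto
  thus ?thesis by (rule ex1_implies_ex)
qed

lemma prod_ext: assumes "is_product C A B P p1 p2" "u \<in> hom C X P" "v \<in> hom C X P"
   "p1 \<cdot> u = p1 \<cdot> v" "p2 \<cdot> u = p2 \<cdot> v"
  shows "u = v"
proof -
  have X: "X \<in> Obj C" using assms(2) dom_obj by auto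
  have "p1 \<cdot> u \<in> hom C X A" "p2 \<cdot> u \<in> hom C X B" using assms prod_basic by auto
  moreover have "\<forall>X\<in>Obj C. \<forall>f1\<in>hom C X A. \<forall>f2\<in>hom C X B. \<exists>!u. u \<in> hom C X P \<and> p1 \<cdot> u = f1 \<and> p2 \<cdot> u = f2"
    using assms(1) unfolding is_product_def by (elim conjE)
  ultimately have "\<exists>!w. w \<in> hom C X P \<and> p1 \<cdot> w = p1 \<cdot> u \<and> p2 \<cdot> w = p2 \<cdot> u"
    using X by (elim ballE) auto
  thus ?thesis using assms(2-5) by (metis (no_types, lifting))
qed

lemma pb_basic: assumes "is_pullback C f g P a b"
  shows "P \<in> Obj C" "a \<in> hom C P (Dom C f)" "b \<in> hom C P (Dom C g)" "f \<cdot> a = g \<cdot> b"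
  using assms unfolding is_pullback_def by auto

lemma pb_factor: assumes "is_pullback C f g P a b" "a' \<in> hom C X (Dom C f)" "b' \<in> hom C X (Dom C g)"
    "f \<cdot> a' = g \<cdot> b'"
  shows "\<exists>u. u \<in> hom C X P \<and> a \<cdot> u = a' \<and> b \<cdot> u = b'"
proof -
  have X: "X \<in> Obj C" using assms(2) dom_obj by auto
  have "\<forall>X\<in>Obj C. \<forall>a'\<in>hom C X (Dom C f). \<forall>b'\<in>hom C X (Dom C g). f \<cdot> a' = g \<cdot> b' \<longrightarrow>
        (\<exists>!u. u \<in> hom C X P \<and> a \<cdot> u = a' \<and> b \<cdot> u = b')"
    using assms(1) unfolding is_pullback_def by (elim conjE)
  hence "\<exists>!u. u \<in> hom C X P \<and> a \<cdot> u = a' \<and> b \<cdot> u = b'" using X assms(2-4) by (elim ballE) auto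
  thus ?thesis by (rule ex1_implies_ex)
qed

lemma pb_ext: assumes pb0: "is_pullback C f g P a b" and fg: "f \<in> Arr C" "g \<in> Arr C"
   and uv: "u \<in> hom C X P" "v \<in> hom C X P" "a \<cdot> u = a \<cdot> v" "b \<cdot> u = b \<cdot> v"
  shows "u = v"
proof -
  note pb = pb_basic[OF pb0]
  have X: "X \<in> Obj C" using uv(1) dom_obj by auto
  have 1: "a \<cdot> u \<in> hom C X (Dom C f)" "b \<cdot> u \<in> hom C X (Dom C g)" using uv pb by auto
  have g: "Cod C g = Cod C f"
  proof -
    have "Cod C (g \<cdot> b) = Cod C (f \<cdot> a)" using pb(4) by simp
    moreover have "Cod C (g \<cdot> b) = Cod C g" "Cod C (f \<cdot> a) = Cod C f"
      using pb(2,3) fg by auto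
    ultimately show ?thesis by simp
  qed
  have "f \<cdot> (a \<cdot> u) = (f \<cdot> a) \<cdot> u" using as[of u X P a "Dom C f" f "Cod C f"] fg uv pb by simp
  also have "\<dots> = (g \<cdot> b) \<cdot> u" using pb by simp
  also have "\<dots> = g \<cdot> (b \<cdot> u)" using as[of u X P b "Dom C g" g "Cod C g"] fg uv pb g by simp
  finally have e: "f \<cdot> (a \<cdot> u) = g \<cdot> (b \<cdot> u)" .
  have "\<forall>X\<in>Obj C. \<forall>a'\<in>hom C X (Dom C f). \<forall>b'\<in>hom C X (Dom C g). f \<cdot> a' = g \<cdot> b' \<longrightarrow>
        (\<exists>!u. u \<in> hom C X P \<and> a \<cdot> u = a' \<and> b \<cdot> u = b')"
    using pb0 unfolding is_pullback_def by (elim conjE)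
  hence "\<exists>!w. w \<in> hom C X P \<and> a \<cdot> w = a \<cdot> u \<and> b \<cdot> w = b \<cdot> u"
    using X 1 e by (elim ballE) auto
  thus ?thesis using uv by (metis (no_types, lifting))
qed

end


context ab begin

lemma pb_ex: assumes i: "mono C i" and q: "q \<in> Arr C" "Cod C q = Cod C i"
  shows "\<exists>P a b. is_pullback C i q P a b"
proof -
  have iA: "i \<in> Arr C" using i mono_arr by auto
  obtain c where c: "is_cokernel C i c" "is_kernel C c i" using mono_ker_coker[OF i] by blast
  note cb = cokernel_basic[OF c(1)]
  have cq: "c \<cdot> q \<in> Arr C" "Dom C (c \<cdot> q) = Dom C q" using q cb by auto
  obtain b where b: "is_kernel C (c \<cdot> q) b" using ker_ex[OF cq(1)] by blast
  note bb = kernel_basic[OF b]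
  have bA: "b \<in> Arr C" "Cod C b = Dom C q" using bb cq by auto
  have qb: "q \<cdot> b \<in> Arr C" "Cod C (q \<cdot> b) = Dom C c" "Dom C (q \<cdot> b) = Dom C b" using bA q cb by auto
  have "(c \<cdot> q) \<cdot> b = c \<cdot> (q \<cdot> b)" using assoc[of b q c] bA q cb by simp
  hence z: "zero_arr C (c \<cdot> (q \<cdot> b))" using bb(4) by simp
  obtain a where a: "a \<in> hom C (Dom C b) (Dom C i)" "i \<cdot> a = q \<cdot> b"
    using kernel_factor[OF c(2) qb(1) qb(2) z] qb(3) by auto
  have "is_pullback C i q (Dom C b) a b"
    unfolding is_pullback_def
  proof (intro conjI ballI impI)
    show "Dom C b \<in> Obj C" using bA by auto
    show "a \<in> hom C (Dom C b) (Dom C i)" by fact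
    show "b \<in> hom C (Dom C b) (Dom C q)" using bA by simp
    show "i \<cdot> a = q \<cdot> b" by fact
    fix X a' b' assume X: "X \<in> Obj C" "a' \<in> hom C X (Dom C i)" "b' \<in> hom C X (Dom C q)" "i \<cdot> a' = q \<cdot> b'"
    have "(c \<cdot> q) \<cdot> b' = c \<cdot> (q \<cdot> b')" using assoc[of b' q c] X q cb by simp
    also have "\<dots> = c \<cdot> (i \<cdot> a')" using X by simp
    also have "\<dots> = (c \<cdot> i) \<cdot> a'" using assoc[of a' i c] X iA cb by simp
    finally have "zero_arr C ((c \<cdot> q) \<cdot> b')" using zero_comp_r[OF cb(4), of a'] X iA cb by simp
    then obtain u where u: "u \<in> hom C X (Dom C b)" "b \<cdot> u = b'"
      using kernel_factor[OF b, of b'] X cq by auto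
    have "i \<cdot> (a \<cdot> u) = (i \<cdot> a) \<cdot> u" using assoc[of u a i] u a iA by simp
    also have "\<dots> = (q \<cdot> b) \<cdot> u" using a by simp
    also have "\<dots> = q \<cdot> (b \<cdot> u)" using assoc[of u b q] u bA q by simp
    also have "\<dots> = i \<cdot> a'" using u X by simp
    finally have "a \<cdot> u = a'" using mono_cancel[OF i, of "a \<cdot> u" a'] u a X by simp
    hence ex: "u \<in> hom C X (Dom C b) \<and> a \<cdot> u = a' \<and> b \<cdot> u = b'" using u by simp
    have "mono C b" by (rule kernel_mono[OF b])
    hence "\<And>v. v \<in> hom C X (Dom C b) \<and> a \<cdot> v = a' \<and> b \<cdot> v = b' \<Longrightarrow> v = u"
      using mono_cancel[of b] u bA by (metis hom_iff)
    thus "\<exists>!u. u \<in> hom C X (Dom C b) \<and> a \<cdot> u = a' \<and> b \<cdot> u = b'" using ex by blast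
  qed
  thus ?thesis by blast
qed

lemma pb_mono: assumes pb0: "is_pullback C i q P a b" and i: "mono C i" and q: "q \<in> Arr C"
  shows "mono C b"
  unfolding mono_def
proof (intro conjI ballI impI)
  note pb = pb_basic[OF pb0]
  have iA: "i \<in> Arr C" using i mono_arr by auto
  show "b \<in> Arr C" using pb by simp
  fix g h assume g: "g \<in> Arr C" "h \<in> Arr C" "Cod C g = Dom C b" "Cod C h = Dom C b"
      "Dom C g = Dom C h" "b \<cdot> g = b \<cdot> h"
  have "i \<cdot> (a \<cdot> g) = (i \<cdot> a) \<cdot> g" using assoc[of g a i] g pb iA by simp
  also have "\<dots> = (q \<cdot> b) \<cdot> g" using pb by simp
  also have "\<dots> = q \<cdot> (b \<cdot> g)" using assoc[of g b q] g pb q by simp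
  also have "\<dots> = q \<cdot> (b \<cdot> h)" using g by simp
  also have "\<dots> = (q \<cdot> b) \<cdot> h" using assoc[of h b q] g pb q by simp
  also have "\<dots> = (i \<cdot> a) \<cdot> h" using pb by simp
  also have "\<dots> = i \<cdot> (a \<cdot> h)" using assoc[of h a i] g pb iA by simp
  finally have "a \<cdot> g = a \<cdot> h" using mono_cancel[OF i, of "a \<cdot> g" "a \<cdot> h"] g pb by simp
  thus "g = h" using pb_ext[OF pb0 iA q, of g "Dom C g" h] g pb by simp
qed

lemma pb_kernel: assumes pb0: "is_pullback C i q P a b" and i: "mono C i" and q: "q \<in> Arr C"
   and c: "is_cokernel C i c" "is_kernel C c i" and cq: "Cod C q = Cod C i"
  shows "is_kernel C (c \<cdot> q) b"
  unfolding is_kernel_def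
proof (intro conjI ballI impI)
  note pb = pb_basic[OF pb0]
  note cb = cokernel_basic[OF c(1)]
  have iA: "i \<in> Arr C" using i mono_arr by auto
  show cqA: "c \<cdot> q \<in> Arr C" using q cq cb by simp
  show "b \<in> Arr C" using pb by simp
  show "Cod C b = Dom C (c \<cdot> q)" using pb q cq cb by simp
  have "(c \<cdot> q) \<cdot> b = c \<cdot> (q \<cdot> b)" using assoc[of b q c] pb q cq cb by simp
  also have "\<dots> = c \<cdot> (i \<cdot> a)" using pb by simp
  also have "\<dots> = (c \<cdot> i) \<cdot> a" using assoc[of a i c] pb iA cb by simp
  finally show "zero_arr C ((c \<cdot> q) \<cdot> b)" using zero_comp_r[OF cb(4), of a] pb iA cb by simp
  fix k' assume k': "k' \<in> Arr C" "Cod C k' = Dom C (c \<cdot> q)" "zero_arr C ((c \<cdot> q) \<cdot> k')"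
  have k'': "Cod C k' = Dom C q" using k' q cq cb by simp
  have "(c \<cdot> q) \<cdot> k' = c \<cdot> (q \<cdot> k')" using assoc[of k' q c] k'' k' q cq cb by simp
  hence z: "zero_arr C (c \<cdot> (q \<cdot> k'))" using k' by simp
  obtain t where t: "t \<in> hom C (Dom C k') (Dom C i)" "i \<cdot> t = q \<cdot> k'"
    using kernel_factor[OF c(2), of "q \<cdot> k'"] z k'' k' q cq cb by auto
  obtain u where u: "u \<in> hom C (Dom C k') P" "a \<cdot> u = t" "b \<cdot> u = k'"
    using pb_factor[OF pb0, of t "Dom C k'" k'] t k' k'' by auto
  have ex: "u \<in> hom C (Dom C k') (Dom C b) \<and> b \<cdot> u = k'" using u pb by simp
  have "mono C b" by (rule pb_mono[OF pb0 i q])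
  hence "\<And>v. v \<in> hom C (Dom C k') (Dom C b) \<and> b \<cdot> v = k' \<Longrightarrow> v = u"
    using mono_cancel[of b] u pb by (metis hom_iff)
  thus "\<exists>!u. u \<in> hom C (Dom C k') (Dom C b) \<and> b \<cdot> u = k'" using ex by blast
qed

lemma pb_epi: assumes pb0: "is_pullback C i q P a b" and i: "mono C i" and q: "epi C q"
   and cq: "Cod C q = Cod C i"
  shows "epi C a"
  unfolding epi_def
proof (intro conjI ballI impI)
  note pb = pb_basic[OF pb0]
  have iA: "i \<in> Arr C" using i mono_arr by auto
  have qA: "q \<in> Arr C" using q epi_arr by auto
  obtain c where c: "is_cokernel C i c" "is_kernel C c i" using mono_ker_coker[OF i] by blast
  note cb = cokernel_basic[OF c(1)]
  have bker: "is_kernel C (c \<cdot> q) b" by (rule pb_kernel[OF pb0 i qA c cq])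
  have cqe: "epi C (c \<cdot> q)" using epi_comp[OF q cokernel_epi[OF c(1)]] cq cb by simp
  have cqcok: "is_cokernel C b (c \<cdot> q)" by (rule epi_conormal[OF cqe bker])
  show aA: "a \<in> Arr C" using pb by simp
  fix g h assume gh: "g \<in> Arr C" "h \<in> Arr C" "Dom C g = Cod C a" "Dom C h = Cod C a"
      "Cod C g = Cod C h" "g \<cdot> a = h \<cdot> a"
  define N where "N = Dom C i"
  define T where "T = Cod C g"
  have N: "N \<in> Obj C" unfolding N_def using iA by auto
  have T: "T \<in> Obj C" unfolding T_def using gh by auto
  have gH: "g \<in> hom C N T" "h \<in> hom C N T" using gh pb unfolding N_def T_def by auto
  obtain NT p1 p2 where pr: "is_product C N T NT p1 p2" using prod_ex[OF N T] by blast
  note prb = prod_basic[OF pr]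
  obtain u1 where u1: "u1 \<in> hom C N NT" "p1 \<cdot> u1 = Id C N" "p2 \<cdot> u1 = g"
    using prod_tup[OF pr idh[OF N] gH(1)] by blast
  obtain u2 where u2: "u2 \<in> hom C N NT" "p1 \<cdot> u2 = Id C N" "p2 \<cdot> u2 = h"
    using prod_tup[OF pr idh[OF N] gH(2)] by blast
  have m1: "mono C u1" using split_mono[of u1 p1] u1 prb by simp
  have m2: "mono C u2" using split_mono[of u2 p1] u2 prb by simp
  obtain E k k' where epb: "is_pullback C u1 u2 E k k'"
    using pb_ex[OF m1, of u2] u1 u2 by auto
  note eb = pb_basic[OF epb]
  have kH: "k \<in> hom C E N" "k' \<in> hom C E N" using eb u1 u2 by auto
  have "k = p1 \<cdot> (u1 \<cdot> k)" using as[OF kH(1) u1(1) prb(2)] u1 kH by simp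
  also have "\<dots> = p1 \<cdot> (u2 \<cdot> k')" using eb by simp
  also have "\<dots> = k'" using as[OF kH(2) u2(1) prb(2)] u2 kH by simp
  finally have kk: "k = k'" .
  have "g \<cdot> k = p2 \<cdot> (u1 \<cdot> k)" using as[OF kH(1) u1(1) prb(3)] u1 by simp
  also have "\<dots> = p2 \<cdot> (u2 \<cdot> k')" using eb by simp
  also have "\<dots> = h \<cdot> k" using as[OF kH(2) u2(1) prb(3)] u2 kk by simp
  finally have gk: "g \<cdot> k = h \<cdot> k" .
  have km: "mono C k" using pb_mono[OF epb m1] u2 kk by simp
  have aH: "a \<in> hom C P N" using pb unfolding N_def by simp
  have "u1 \<cdot> a = u2 \<cdot> a"
  proof (rule prod_ext[OF pr])
    show "u1 \<cdot> a \<in> hom C P NT" "u2 \<cdot> a \<in> hom C P NT" using aH u1 u2 by auto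
    show "p1 \<cdot> (u1 \<cdot> a) = p1 \<cdot> (u2 \<cdot> a)"
      using as[OF aH u1(1) prb(2)] as[OF aH u2(1) prb(2)] u1 u2 by simp
    show "p2 \<cdot> (u1 \<cdot> a) = p2 \<cdot> (u2 \<cdot> a)"
      using as[OF aH u1(1) prb(3)] as[OF aH u2(1) prb(3)] u1 u2 gh by simp
  qed
  then obtain a0 where a0: "a0 \<in> hom C P E" "k \<cdot> a0 = a"
    using pb_factor[OF epb, of a P a] aH u1 u2 by auto
  have ikm: "mono C (i \<cdot> k)" using mono_comp[OF km i] kH unfolding N_def by simp
  have ikH: "i \<cdot> k \<in> hom C E (Cod C i)" using kH iA unfolding N_def by simp
  obtain d where d: "is_cokernel C (i \<cdot> k) d" "is_kernel C d (i \<cdot> k)" using mono_ker_coker[OF ikm] by blast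
  note db = cokernel_basic[OF d(1)]
  have dH: "d \<in> hom C (Cod C i) (Cod C d)" using db ikH by simp
  have qH: "q \<in> hom C (Dom C q) (Cod C i)" using qA cq by simp
  have bH: "b \<in> hom C P (Dom C q)" using pb by simp
  have iH: "i \<in> hom C N (Cod C i)" using iA unfolding N_def by simp
  have "(d \<cdot> q) \<cdot> b = d \<cdot> (q \<cdot> b)" using as[OF bH qH dH] by simp
  also have "\<dots> = d \<cdot> (i \<cdot> a)" using pb by simp
  also have "\<dots> = d \<cdot> (i \<cdot> (k \<cdot> a0))" using a0 by simp
  also have "\<dots> = d \<cdot> ((i \<cdot> k) \<cdot> a0)" using as[OF a0(1) kH(1) iH] by simp
  also have "\<dots> = (d \<cdot> (i \<cdot> k)) \<cdot> a0" using as[OF a0(1) ikH dH] by simp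
  finally have "zero_arr C ((d \<cdot> q) \<cdot> b)" using zero_comp_r[OF db(4), of a0] a0 ikH db by simp
  moreover have "d \<cdot> q \<in> Arr C" "Dom C (d \<cdot> q) = Cod C b" using qH dH bH by auto
  ultimately obtain v where v: "v \<in> hom C (Cod C (c \<cdot> q)) (Cod C (d \<cdot> q))" "v \<cdot> (c \<cdot> q) = d \<cdot> q"
    using cokernel_factor[OF cqcok, of "d \<cdot> q"] by auto
  have cH: "c \<in> hom C (Cod C i) (Cod C c)" using cb iA by simp
  have vH: "v \<in> hom C (Cod C c) (Cod C d)" using v qH cH dH by simp
  have "(v \<cdot> c) \<cdot> q = d \<cdot> q" using as[OF qH cH vH] v by simp
  hence vc: "v \<cdot> c = d" using epi_cancel[OF q, of "v \<cdot> c" d] vH cH dH qH by simp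
  have "d \<cdot> i = v \<cdot> (c \<cdot> i)" using as[OF iH cH vH] vc by simp
  hence "zero_arr C (d \<cdot> i)" using zero_comp_l[OF cb(4), of v] vH cH iH by simp
  then obtain s where s: "s \<in> hom C (Dom C i) (Dom C (i \<cdot> k))" "(i \<cdot> k) \<cdot> s = i"
    using kernel_factor[OF d(2), of i] iH dH by auto
  have sH: "s \<in> hom C N E" using s ikH unfolding N_def by simp
  have "i \<cdot> (k \<cdot> s) = i \<cdot> Id C N" using as[OF sH kH(1) iH] s iH by simp
  hence ks: "k \<cdot> s = Id C N" using mono_cancel[OF i, of "k \<cdot> s" "Id C N"] sH kH N unfolding N_def by simp
  have "g = g \<cdot> (k \<cdot> s)" using ks gH by simp
  also have "\<dots> = (g \<cdot> k) \<cdot> s" using as[OF sH kH(1) gH(1)] by simp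
  also have "\<dots> = (h \<cdot> k) \<cdot> s" using gk by simp
  also have "\<dots> = h \<cdot> (k \<cdot> s)" using as[OF sH kH(1) gH(2)] by simp
  also have "\<dots> = h" using ks gH by simp
  finally show "g = h" .
qed

end


context ab begin

lemma valid_iff: "valid_span C M M' (N,p,i) \<longleftrightarrow> N \<in> Obj C \<and> p \<in> hom C N M \<and> epi C p \<and> i \<in> hom C N M' \<and> mono C i"
  by (simp add: valid_span_def)

lemma step_iff: "span_step C (N,p,i) (N',p',i') \<longleftrightarrow> (\<exists>j\<in>hom C N N'. mono C j \<and> p' \<cdot> j = p \<and> i' \<cdot> j = i)"
  by (simp add: span_step_def)

lemma comps_iff: "t \<in> span_comps C (N,p,i) (K,q,k) \<longleftrightarrow> (\<exists>P a b. t = (P, p \<cdot> a, k \<cdot> b) \<and> is_pullback C i q P a b)"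
  by (simp add: span_comps_def)

lemma comp_valid: assumes f: "valid_span C X Y (N,p,i)" and g: "valid_span C Y Z (K,q,k)"
  and pb0: "is_pullback C i q P a b"
  shows "valid_span C X Z (P, p \<cdot> a, k \<cdot> b)"
proof -
  note pb = pb_basic[OF pb0]
  have fv: "N \<in> Obj C" "p \<in> hom C N X" "epi C p" "i \<in> hom C N Y" "mono C i" using f valid_iff by auto
  have gv: "K \<in> Obj C" "q \<in> hom C K Y" "epi C q" "k \<in> hom C K Z" "mono C k" using g valid_iff by auto
  have ae: "epi C a" using pb_epi[OF pb0 fv(5) gv(3)] fv gv by simp
  have bm: "mono C b" using pb_mono[OF pb0 fv(5)] gv by simp
  show ?thesis unfolding valid_iff using pb fv gv epi_comp[OF ae fv(3)] mono_comp[OF bm gv(5)] by auto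
qed

lemma step_left: assumes f: "valid_span C X Y (N,p,i)" and f': "valid_span C X Y (N',p',i')"
  and st: "span_step C (N,p,i) (N',p',i')" and g: "valid_span C Y Z (K,q,k)"
  and pb0: "is_pullback C i q P a b" and pb1: "is_pullback C i' q P' a' b'"
  shows "span_step C (P, p \<cdot> a, k \<cdot> b) (P', p' \<cdot> a', k \<cdot> b')"
proof -
  note pb = pb_basic[OF pb0] and pb' = pb_basic[OF pb1]
  have fv: "N \<in> Obj C" "p \<in> hom C N X" "epi C p" "i \<in> hom C N Y" "mono C i" using f valid_iff by auto
  have fv': "N' \<in> Obj C" "p' \<in> hom C N' X" "epi C p'" "i' \<in> hom C N' Y" "mono C i'" using f' valid_iff by auto
  have gv: "K \<in> Obj C" "q \<in> hom C K Y" "epi C q" "k \<in> hom C K Z" "mono C k" using g valid_iff by auto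
  obtain j where j: "j \<in> hom C N N'" "mono C j" "p' \<cdot> j = p" "i' \<cdot> j = i" using st step_iff by blast
  have aH: "a \<in> hom C P N" "b \<in> hom C P K" using pb fv gv by auto
  have aH': "a' \<in> hom C P' N'" "b' \<in> hom C P' K" using pb' fv' gv by auto
  have "i' \<cdot> (j \<cdot> a) = (i' \<cdot> j) \<cdot> a" using as[OF aH(1) j(1) fv'(4)] .
  hence e: "i' \<cdot> (j \<cdot> a) = q \<cdot> b" using j pb by simp
  obtain u where u: "u \<in> hom C P P'" "a' \<cdot> u = j \<cdot> a" "b' \<cdot> u = b"
    using pb_factor[OF pb1, of "j \<cdot> a" P b] e aH j fv' gv by auto
  have bm: "mono C b" using pb_mono[OF pb0 fv(5)] gv by simp
  have um: "mono C u" using mono_factor[of b' u] bm u aH' by simp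
  have "(p' \<cdot> a') \<cdot> u = p' \<cdot> (a' \<cdot> u)" using as[OF u(1) aH'(1) fv'(2)] by simp
  also have "\<dots> = (p' \<cdot> j) \<cdot> a" using u as[OF aH(1) j(1) fv'(2)] by simp
  finally have 1: "(p' \<cdot> a') \<cdot> u = p \<cdot> a" using j by simp
  have "(k \<cdot> b') \<cdot> u = k \<cdot> (b' \<cdot> u)" using as[OF u(1) aH'(2) gv(4)] by simp
  hence 2: "(k \<cdot> b') \<cdot> u = k \<cdot> b" using u by simp
  show ?thesis unfolding step_iff using u(1) um 1 2 by blast
qed

lemma step_right: assumes f: "valid_span C X Y (N,p,i)" and g: "valid_span C Y Z (K,q,k)"
  and g': "valid_span C Y Z (K',q',k')" and st: "span_step C (K,q,k) (K',q',k')"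
  and pb0: "is_pullback C i q P a b" and pb1: "is_pullback C i q' P' a' b'"
  shows "span_step C (P, p \<cdot> a, k \<cdot> b) (P', p \<cdot> a', k' \<cdot> b')"
proof -
  note pb = pb_basic[OF pb0] and pb' = pb_basic[OF pb1]
  have fv: "N \<in> Obj C" "p \<in> hom C N X" "epi C p" "i \<in> hom C N Y" "mono C i" using f valid_iff by auto
  have gv: "K \<in> Obj C" "q \<in> hom C K Y" "epi C q" "k \<in> hom C K Z" "mono C k" using g valid_iff by auto
  have gv': "K' \<in> Obj C" "q' \<in> hom C K' Y" "epi C q'" "k' \<in> hom C K' Z" "mono C k'" using g' valid_iff by auto
  obtain j where j: "j \<in> hom C K K'" "mono C j" "q' \<cdot> j = q" "k' \<cdot> j = k" using st step_iff by blast
  have aH: "a \<in> hom C P N" "b \<in> hom C P K" using pb fv gv by auto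
  have aH': "a' \<in> hom C P' N" "b' \<in> hom C P' K'" using pb' fv gv' by auto
  have "q' \<cdot> (j \<cdot> b) = (q' \<cdot> j) \<cdot> b" using as[OF aH(2) j(1) gv'(2)] .
  hence e: "i \<cdot> a = q' \<cdot> (j \<cdot> b)" using j pb by simp
  obtain u where u: "u \<in> hom C P P'" "a' \<cdot> u = a" "b' \<cdot> u = j \<cdot> b"
    using pb_factor[OF pb1, of a P "j \<cdot> b"] e aH j fv gv' by auto
  have bm: "mono C b" using pb_mono[OF pb0 fv(5)] gv by simp
  have jbm: "mono C (j \<cdot> b)" using mono_comp[OF bm j(2)] aH j by simp
  have um: "mono C u" using mono_factor[of b' u] jbm u aH' by simp
  have "(p \<cdot> a') \<cdot> u = p \<cdot> (a' \<cdot> u)" using as[OF u(1) aH'(1) fv(2)] by simp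
  hence 1: "(p \<cdot> a') \<cdot> u = p \<cdot> a" using u by simp
  have "(k' \<cdot> b') \<cdot> u = k' \<cdot> (b' \<cdot> u)" using as[OF u(1) aH'(2) gv'(4)] by simp
  also have "\<dots> = (k' \<cdot> j) \<cdot> b" using u as[OF aH(2) j(1) gv'(4)] by simp
  finally have 2: "(k' \<cdot> b') \<cdot> u = k \<cdot> b" using j by simp
  show ?thesis unfolding step_iff using u(1) um 1 2 by blast
qed

lemma step_refl: "valid_span C X Y (N,p,i) \<Longrightarrow> span_step C (N,p,i) (N,p,i)"
  unfolding step_iff valid_iff using id_mono by (intro bexI[of _ "Id C N"]) auto

lemma comps_ex: assumes f: "valid_span C X Y (N,p,i)" and g: "valid_span C Y Z (K,q,k)"
  shows "\<exists>t. t \<in> span_comps C (N,p,i) (K,q,k)"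
proof -
  have "mono C i" "q \<in> Arr C" "Cod C q = Cod C i" using f g valid_iff by auto
  then obtain P a b where "is_pullback C i q P a b" using pb_ex by blast
  thus ?thesis unfolding comps_iff by blast
qed

lemma equiv_refl: "span_equiv C X Y s s" unfolding span_equiv_def by simp

lemma equiv_sym: assumes "span_equiv C X Y s t" shows "span_equiv C X Y t s"
  using assms unfolding span_equiv_def
proof (induction rule: rtranclp_induct)
  case base thus ?case by simp
next
  case (step y z)
  thus ?case by (metis (mono_tags, lifting) converse_rtranclp_into_rtranclp)
qed

lemma equiv_trans: "span_equiv C X Y s t \<Longrightarrow> span_equiv C X Y t u \<Longrightarrow> span_equiv C X Y s u"
  unfolding span_equiv_def by (rule rtranclp_trans)

lemma equiv_R: "valid_span C X Y s \<Longrightarrow> valid_span C X Y t \<Longrightarrow> span_step C s t \<or> span_step C t s \<Longrightarrow> span_equiv C X Y s t"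
  unfolding span_equiv_def by (rule r_into_rtranclp) simp

lemma comp_R_left: assumes "valid_span C X Y f" "valid_span C X Y f'" "span_step C f f' \<or> span_step C f' f"
  "valid_span C Y Z g" "t \<in> span_comps C f g" "t' \<in> span_comps C f' g"
  shows "valid_span C X Z t \<and> valid_span C X Z t' \<and> (span_step C t t' \<or> span_step C t' t)"
proof -
  obtain N p i where f: "f = (N,p,i)" by (cases f) auto
  obtain N' p' i' where f': "f' = (N',p',i')" by (cases f') auto
  obtain K q k where g: "g = (K,q,k)" by (cases g) auto
  obtain P a b where t: "t = (P, p \<cdot> a, k \<cdot> b)" "is_pullback C i q P a b" using assms(5) f g comps_iff by blast
  obtain P' a' b' where t': "t' = (P', p' \<cdot> a', k \<cdot> b')" "is_pullback C i' q P' a' b'" using assms(6) f' g comps_iff by blast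
  have v: "valid_span C X Z t" "valid_span C X Z t'" using comp_valid t t' assms f f' g by auto
  have "span_step C t t' \<or> span_step C t' t"
    using assms(3)
  proof
    assume "span_step C f f'" thus ?thesis using step_left[of X Y N p i N' p' i'] t t' assms f f' g by auto
  next
    assume "span_step C f' f" thus ?thesis using step_left[of X Y N' p' i' N p i] t t' assms f f' g by auto
  qed
  thus ?thesis using v by auto
qed

lemma comp_R_right: assumes "valid_span C X Y f" "valid_span C Y Z g" "valid_span C Y Z g'" "span_step C g g' \<or> span_step C g' g"
  "t \<in> span_comps C f g" "t' \<in> span_comps C f g'"
  shows "valid_span C X Z t \<and> valid_span C X Z t' \<and> (span_step C t t' \<or> span_step C t' t)"
proof -
  obtain N p i where f: "f = (N,p,i)" by (cases f) auto
  obtain K' q' k' where g': "g' = (K',q',k')" by (cases g') auto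
  obtain K q k where g: "g = (K,q,k)" by (cases g) auto
  obtain P a b where t: "t = (P, p \<cdot> a, k \<cdot> b)" "is_pullback C i q P a b" using assms(5) f g comps_iff by blast
  obtain P' a' b' where t': "t' = (P', p \<cdot> a', k' \<cdot> b')" "is_pullback C i q' P' a' b'" using assms(6) f g' comps_iff by blast
  have v: "valid_span C X Z t" "valid_span C X Z t'" using comp_valid t t' assms f g' g by auto
  have "span_step C t t' \<or> span_step C t' t"
    using assms(4)
  proof
    assume "span_step C g g'" thus ?thesis using step_right[of X Y N p i Z K q k K' q' k'] t t' assms f g' g by auto
  next
    assume "span_step C g' g" thus ?thesis using step_right[of X Y N p i Z K' q' k' K q k] t t' assms f g' g by auto
  qed
  thus ?thesis using v by auto
qed

lemma comps_ex': "valid_span C X Y f \<Longrightarrow> valid_span C Y Z g \<Longrightarrow> \<exists>t. t \<in> span_comps C f g"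
  using comps_ex by (cases f, cases g) blast

lemma comp_inv_left: assumes "span_equiv C X Y f f0" "valid_span C X Y f" "valid_span C Y Z g"
  "t \<in> span_comps C f g" "t0 \<in> span_comps C f0 g"
  shows "span_equiv C X Z t t0"
  using assms(1,5) unfolding span_equiv_def
proof (induction arbitrary: t0 rule: rtranclp_induct)
  case base
  have "valid_span C X Z t \<and> valid_span C X Z t0 \<and> (span_step C t t0 \<or> span_step C t0 t)"
    using comp_R_left[OF assms(2) assms(2) _ assms(3) assms(4) base] step_refl assms(2) by (cases f) blast
  thus ?case by (intro r_into_rtranclp) simp
next
  case (step f1 f2)
  have v1: "valid_span C X Y f1" "valid_span C X Y f2" using step.hyps(2) by auto
  obtain t1 where t1: "t1 \<in> span_comps C f1 g" using comps_ex'[OF v1(1) assms(3)] by blast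
  have 1: "(\<lambda>s t. valid_span C X Z s \<and> valid_span C X Z t \<and> (span_step C s t \<or> span_step C t s))\<^sup>*\<^sup>* t t1"
    using step.IH[OF t1] .
  have "valid_span C X Z t1 \<and> valid_span C X Z t0 \<and> (span_step C t1 t0 \<or> span_step C t0 t1)"
    using comp_R_left[OF v1 _ assms(3) t1 step.prems] step.hyps(2) by blast
  thus ?case using 1 by (metis (mono_tags, lifting) rtranclp.rtrancl_into_rtrancl)
qed

lemma comp_inv_right: assumes "span_equiv C Y Z g g0" "valid_span C X Y f" "valid_span C Y Z g"
  "t \<in> span_comps C f g" "t0 \<in> span_comps C f g0"
  shows "span_equiv C X Z t t0"
  using assms(1,5) unfolding span_equiv_def
proof (induction arbitrary: t0 rule: rtranclp_induct)
  case base
  have "valid_span C X Z t \<and> valid_span C X Z t0 \<and> (span_step C t t0 \<or> span_step C t0 t)"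
    using comp_R_right[OF assms(2) assms(3) assms(3) _ assms(4) base] step_refl assms(3) by (cases g) blast
  thus ?case by (intro r_into_rtranclp) simp
next
  case (step g1 g2)
  have v1: "valid_span C Y Z g1" "valid_span C Y Z g2" using step.hyps(2) by auto
  obtain t1 where t1: "t1 \<in> span_comps C f g1" using comps_ex'[OF assms(2) v1(1)] by blast
  have 1: "(\<lambda>s t. valid_span C X Z s \<and> valid_span C X Z t \<and> (span_step C s t \<or> span_step C t s))\<^sup>*\<^sup>* t t1"
    using step.IH[OF t1] .
  have "valid_span C X Z t1 \<and> valid_span C X Z t0 \<and> (span_step C t1 t0 \<or> span_step C t0 t1)"
    using comp_R_right[OF assms(2) v1 _ t1 step.prems] step.hyps(2) by blast
  thus ?case using 1 by (metis (mono_tags, lifting) rtranclp.rtrancl_into_rtrancl)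
qed

lemma Qcomp_eq: assumes F0: "valid_span C X Y F0" and H0: "valid_span C Y Z H0"
  and s0: "s0 \<in> span_comps C F0 H0" and B: "span_equiv C X Z s0 B"
  shows "Qcomp C X Y Z (span_class C Y Z H0) (span_class C X Y F0) = span_class C X Z B"
proof
  show "Qcomp C X Y Z (span_class C Y Z H0) (span_class C X Y F0) \<subseteq> span_class C X Z B"
  proof
    fix u assume "u \<in> Qcomp C X Y Z (span_class C Y Z H0) (span_class C X Y F0)"
    then obtain f g s where f: "f \<in> span_class C X Y F0" and g: "g \<in> span_class C Y Z H0"
      and s: "s \<in> span_comps C f g" and u: "u \<in> span_class C X Z s" unfolding Qcomp_def by blast
    have fv: "valid_span C X Y f" "span_equiv C X Y f F0" using f equiv_sym unfolding span_class_def by auto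
    have gv: "valid_span C Y Z g" "span_equiv C Y Z g H0" using g equiv_sym unfolding span_class_def by auto
    obtain s1 where s1: "s1 \<in> span_comps C F0 g" using comps_ex'[OF F0 gv(1)] by blast
    have e1: "span_equiv C X Z s s1" by (rule comp_inv_left[OF fv(2) fv(1) gv(1) s s1])
    have e2: "span_equiv C X Z s1 s0" by (rule comp_inv_right[OF gv(2) F0 gv(1) s1 s0])
    have "span_equiv C X Z B u" using u e1 e2 B equiv_trans equiv_sym unfolding span_class_def by blast
    thus "u \<in> span_class C X Z B" using u unfolding span_class_def by auto
  qed
next
  show "span_class C X Z B \<subseteq> Qcomp C X Y Z (span_class C Y Z H0) (span_class C X Y F0)"
  proof
    fix u assume u: "u \<in> span_class C X Z B"
    have "F0 \<in> span_class C X Y F0" "H0 \<in> span_class C Y Z H0"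
      using F0 H0 equiv_refl unfolding span_class_def by auto
    moreover have "u \<in> span_class C X Z s0" using u B equiv_trans unfolding span_class_def by blast
    ultimately show "u \<in> Qcomp C X Y Z (span_class C Y Z H0) (span_class C X Y F0)"
      unfolding Qcomp_def using s0 by blast
  qed
qed

end


context ab begin

lemma pb_id: assumes iH: "i \<in> hom C N Y" shows "is_pullback C i (Id C Y) N (Id C N) i"
proof -
  have N: "N \<in> Obj C" and Y: "Y \<in> Obj C" using iH by auto
  have iA: "i \<in> Arr C" "Dom C i = N" "Cod C i = Y" using iH by auto
  have 1: "Id C N \<in> hom C N (Dom C i)" using iA N by simp
  have 2: "i \<in> hom C N (Dom C (Id C Y))" using iA Y by simp
  have 3: "i \<cdot> Id C N = Id C Y \<cdot> i" using idl[OF iH] idr[OF iH] by simp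
  have 4: "\<exists>!u. u \<in> hom C X N \<and> Id C N \<cdot> u = a' \<and> i \<cdot> u = b'"
    if h: "a' \<in> hom C X (Dom C i)" "b' \<in> hom C X (Dom C (Id C Y))" "i \<cdot> a' = Id C Y \<cdot> b'" for X a' b'
  proof
    have aH: "a' \<in> hom C X N" using h(1) iA by simp
    have bH: "b' \<in> hom C X Y" using h(2) Y by simp
    have b': "b' = i \<cdot> a'" using h(3) idl[OF bH] by simp
    show "a' \<in> hom C X N \<and> Id C N \<cdot> a' = a' \<and> i \<cdot> a' = b'" using aH idl[OF aH] b' by simp
    fix u assume "u \<in> hom C X N \<and> Id C N \<cdot> u = a' \<and> i \<cdot> u = b'"
    thus "u = a'" using idl[of u X N] by simp
  qed
  show ?thesis unfolding is_pullback_def using N 1 2 3 4 by blast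
qed

lemma main_chain:
  assumes F0: "valid_span C X Y (N,p,i)"
  and pr: "is_product C Y X Z \<pi>1 \<pi>2"
  and e1: "e1 \<in> hom C Y Z" "\<pi>1 \<cdot> e1 = Id C Y" "\<pi>2 \<cdot> e1 = zr Y X"
  and e2: "e2 \<in> hom C X Z" "\<pi>1 \<cdot> e2 = zr X Y" "\<pi>2 \<cdot> e2 = Id C X"
  shows "span_equiv C X Z (N, p, e1 \<cdot> i) (X, Id C X, e2)"
proof -
  have fv: "N \<in> Obj C" "p \<in> hom C N X" "epi C p" "i \<in> hom C N Y" "mono C i" using F0 valid_iff by auto
  note prb = prod_basic[OF pr]
  have X: "X \<in> Obj C" and Y: "Y \<in> Obj C" using fv by auto
  obtain M r1 r2 where pm: "is_product C N X M r1 r2" using prod_ex[OF fv(1) X] by blast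
  note pmb = prod_basic[OF pm]
  have ir1: "i \<cdot> r1 \<in> hom C M Y" using pmb fv by simp
  obtain m where m: "m \<in> hom C M Z" "\<pi>1 \<cdot> m = i \<cdot> r1" "\<pi>2 \<cdot> m = r2"
    using prod_tup[OF pr ir1 pmb(3)] by blast
  obtain j1 where j1: "j1 \<in> hom C N M" "r1 \<cdot> j1 = Id C N" "r2 \<cdot> j1 = zr N X"
    using prod_tup[OF pm idh[OF fv(1)], of "zr N X"] zr[OF fv(1) X] by blast
  obtain j2 where j2: "j2 \<in> hom C N M" "r1 \<cdot> j2 = Id C N" "r2 \<cdot> j2 = p"
    using prod_tup[OF pm idh[OF fv(1)] fv(2)] by blast
  obtain j3 where j3: "j3 \<in> hom C X M" "r1 \<cdot> j3 = zr X N" "r2 \<cdot> j3 = Id C X"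
    using prod_tup[OF pm _ idh[OF X], of "zr X N"] zr[OF X fv(1)] by blast
  have j1m: "mono C j1" using split_mono[of j1 r1] j1 pmb by simp
  have j2m: "mono C j2" using split_mono[of j2 r1] j2 pmb by simp
  have j3m: "mono C j3" using split_mono[of j3 r2] j3 pmb by simp
  have r1e: "epi C r1" using split_epi[of r1 j1] j1 pmb by simp
  have r2e: "epi C r2" using split_epi[of r2 j3] j3 pmb by simp
  have e2m: "mono C e2" using split_mono[of e2 \<pi>2] e2 prb by simp
  have e1m: "mono C e1" using split_mono[of e1 \<pi>1] e1 prb by simp
  have mm: "mono C m" unfolding mono_def
  proof (intro conjI ballI impI)
    show "m \<in> Arr C" using m by simp
    fix g h assume g: "g \<in> Arr C" "h \<in> Arr C" "Cod C g = Dom C m" "Cod C h = Dom C m"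
      "Dom C g = Dom C h" "m \<cdot> g = m \<cdot> h"
    have gH: "g \<in> hom C (Dom C g) M" "h \<in> hom C (Dom C g) M" using g m by auto
    have "i \<cdot> (r1 \<cdot> g) = (\<pi>1 \<cdot> m) \<cdot> g" using as[OF gH(1) pmb(2) fv(4)] m by simp
    also have "\<dots> = \<pi>1 \<cdot> (m \<cdot> g)" using as[OF gH(1) m(1) prb(2)] by simp
    also have "\<dots> = \<pi>1 \<cdot> (m \<cdot> h)" using g by simp
    also have "\<dots> = (\<pi>1 \<cdot> m) \<cdot> h" using as[OF gH(2) m(1) prb(2)] by simp
    also have "\<dots> = i \<cdot> (r1 \<cdot> h)" using as[OF gH(2) pmb(2) fv(4)] m by simp
    finally have "r1 \<cdot> g = r1 \<cdot> h" using mono_cancel[OF fv(5), of "r1 \<cdot> g" "r1 \<cdot> h"] gH pmb fv by simp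
    moreover have "r2 \<cdot> g = r2 \<cdot> h"
      using as[OF gH(1) m(1) prb(3)] as[OF gH(2) m(1) prb(3)] m g by simp
    ultimately show "g = h" using prod_ext[OF pm gH] by simp
  qed
  have pr1: "p \<cdot> r1 \<in> hom C M X" using fv pmb by simp
  have pr1e: "epi C (p \<cdot> r1)" using epi_comp[OF r1e fv(3)] pmb fv by simp
  have vA1: "valid_span C X Z (M, p \<cdot> r1, m)" unfolding valid_iff using pmb pr1 pr1e m mm by simp
  have vA2: "valid_span C X Z (M, r2, m)" unfolding valid_iff using pmb r2e m mm by simp
  have mj2: "m \<cdot> j2 \<in> hom C N Z" "mono C (m \<cdot> j2)" using mono_comp[OF j2m mm] j2 m by auto
  have vs2: "valid_span C X Z (N, p, m \<cdot> j2)" unfolding valid_iff using fv mj2 by simp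
  have vs0: "valid_span C X Z (N, p, e1 \<cdot> i)" unfolding valid_iff using fv e1 mono_comp[OF fv(5) e1m] by simp
  have vB: "valid_span C X Z (X, Id C X, e2)" unfolding valid_iff using X e2 e2m id_epi[OF X] by simp
  have "(p \<cdot> r1) \<cdot> j1 = p" using as[OF j1(1) pmb(2) fv(2)] j1 fv by simp
  moreover have "m \<cdot> j1 = e1 \<cdot> i"
  proof (rule prod_ext[OF pr])
    show "m \<cdot> j1 \<in> hom C N Z" "e1 \<cdot> i \<in> hom C N Z" using m j1 e1 fv by auto
    have "\<pi>1 \<cdot> (m \<cdot> j1) = (i \<cdot> r1) \<cdot> j1" using as[OF j1(1) m(1) prb(2)] m by simp
    also have "\<dots> = i" using as[OF j1(1) pmb(2) fv(4)] j1 fv by simp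
    also have "\<dots> = \<pi>1 \<cdot> (e1 \<cdot> i)" using as[OF fv(4) e1(1) prb(2)] e1 fv by simp
    finally show "\<pi>1 \<cdot> (m \<cdot> j1) = \<pi>1 \<cdot> (e1 \<cdot> i)" .
    have "\<pi>2 \<cdot> (m \<cdot> j1) = zr N X" using as[OF j1(1) m(1) prb(3)] m j1 by simp
    also have "\<dots> = \<pi>2 \<cdot> (e1 \<cdot> i)"
    proof -
      have "\<pi>2 \<cdot> (e1 \<cdot> i) = zr Y X \<cdot> i" using as[OF fv(4) e1(1) prb(3)] e1 by simp
      moreover have "zero_arr C (zr Y X \<cdot> i)" using zero_comp_r[OF zr_zero[OF Y X], of i] fv X Y by simp
      moreover have "Dom C (zr Y X \<cdot> i) = N" "Cod C (zr Y X \<cdot> i) = X" using fv X Y by auto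
      ultimately show ?thesis using is_zr by metis
    qed
    finally show "\<pi>2 \<cdot> (m \<cdot> j1) = \<pi>2 \<cdot> (e1 \<cdot> i)" .
  qed
  ultimately have st1: "span_step C (N, p, e1 \<cdot> i) (M, p \<cdot> r1, m)" unfolding step_iff using j1 j1m by blast
  have "(p \<cdot> r1) \<cdot> j2 = p" using as[OF j2(1) pmb(2) fv(2)] j2 fv by simp
  hence st2: "span_step C (N, p, m \<cdot> j2) (M, p \<cdot> r1, m)" unfolding step_iff using j2 j2m by blast
  have st3: "span_step C (N, p, m \<cdot> j2) (M, r2, m)" unfolding step_iff using j2 j2m by blast
  have "m \<cdot> j3 = e2"
  proof (rule prod_ext[OF pr])
    show "m \<cdot> j3 \<in> hom C X Z" "e2 \<in> hom C X Z" using m j3 e2 by auto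
    have "\<pi>1 \<cdot> (m \<cdot> j3) = (i \<cdot> r1) \<cdot> j3" using as[OF j3(1) m(1) prb(2)] m by simp
    also have "\<dots> = i \<cdot> zr X N" using as[OF j3(1) pmb(2) fv(4)] j3 by simp
    also have "\<dots> = zr X Y"
    proof -
      have "zero_arr C (i \<cdot> zr X N)" using zero_comp_l[OF zr_zero[OF X fv(1)], of i] fv X by simp
      moreover have "Dom C (i \<cdot> zr X N) = X" "Cod C (i \<cdot> zr X N) = Y" using fv X by auto
      ultimately show ?thesis using is_zr by metis
    qed
    finally show "\<pi>1 \<cdot> (m \<cdot> j3) = \<pi>1 \<cdot> e2" using e2 by simp
    show "\<pi>2 \<cdot> (m \<cdot> j3) = \<pi>2 \<cdot> e2" using as[OF j3(1) m(1) prb(3)] m j3 e2 by simp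
  qed
  hence st4: "span_step C (X, Id C X, e2) (M, r2, m)" unfolding step_iff using j3 j3m by blast
  have q1: "span_equiv C X Z (N, p, e1 \<cdot> i) (M, p \<cdot> r1, m)" using equiv_R vs0 vA1 st1 by blast
  have q2: "span_equiv C X Z (M, p \<cdot> r1, m) (N, p, m \<cdot> j2)" using equiv_R[OF vA1 vs2] st2 by blast
  have q3: "span_equiv C X Z (N, p, m \<cdot> j2) (M, r2, m)" using equiv_R vs2 vA2 st3 by blast
  have q4: "span_equiv C X Z (M, r2, m) (X, Id C X, e2)" using equiv_R[OF vA2 vB] st4 by blast
  show ?thesis using equiv_trans[OF q1 equiv_trans[OF q2 equiv_trans[OF q3 q4]]] .
qed

end


context ab begin

lemma coeq:
  assumes F0: "valid_span C X Y F0"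
  and pr: "is_product C Y X Z \<pi>1 \<pi>2"
  and e1: "e1 \<in> hom C Y Z" "\<pi>1 \<cdot> e1 = Id C Y" "\<pi>2 \<cdot> e1 = zr Y X"
  and e2: "e2 \<in> hom C X Z" "\<pi>1 \<cdot> e2 = zr X Y" "\<pi>2 \<cdot> e2 = Id C X"
  shows "Qcomp C X Y Z (span_class C Y Z (Y, Id C Y, e1)) (span_class C X Y F0) = span_class C X Z (X, Id C X, e2)"
proof -
  obtain N p i where f: "F0 = (N,p,i)" by (cases F0) auto
  have fv: "N \<in> Obj C" "p \<in> hom C N X" "epi C p" "i \<in> hom C N Y" "mono C i" using F0 f valid_iff by auto
  note prb = prod_basic[OF pr]
  have Y: "Y \<in> Obj C" using fv by auto
  have e1m: "mono C e1" using split_mono[of e1 \<pi>1] e1 prb by simp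
  have H0: "valid_span C Y Z (Y, Id C Y, e1)" unfolding valid_iff using Y e1 e1m id_epi[OF Y] by simp
  have "(N, p \<cdot> Id C N, e1 \<cdot> i) \<in> span_comps C F0 (Y, Id C Y, e1)"
    unfolding f comps_iff using pb_id[OF fv(4)] by blast
  moreover have "p \<cdot> Id C N = p" using idr[OF fv(2)] .
  ultimately have s0: "(N, p, e1 \<cdot> i) \<in> span_comps C F0 (Y, Id C Y, e1)" by simp
  show ?thesis using Qcomp_eq[OF F0 H0 s0 main_chain[OF F0[unfolded f] pr e1 e2]] .
qed

end

theorem mainTheorem4:
  fixes C :: "('o,'m) cat"
  assumes "abelian C"
  shows "Q_filtered C"
proof -
  interpret ab C using assms by unfold_locales
  have objne: "Obj C \<noteq> {}" using zobj zero_obj_obj by blast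
  have part2: "\<exists>Z\<in>Obj C. Qhom C X Z \<noteq> {} \<and> Qhom C Y Z \<noteq> {}" if XY: "X \<in> Obj C" "Y \<in> Obj C" for X Y
  proof -
    obtain Z \<pi>1 \<pi>2 where pr: "is_product C Y X Z \<pi>1 \<pi>2" using prod_ex[OF XY(2,1)] by blast
    note prb = prod_basic[OF pr]
    obtain e1 where e1: "e1 \<in> hom C Y Z" "\<pi>1 \<cdot> e1 = Id C Y" "\<pi>2 \<cdot> e1 = zr Y X"
      using prod_tup[OF pr idh[OF XY(2)], of "zr Y X"] zr[OF XY(2,1)] by blast
    obtain e2 where e2: "e2 \<in> hom C X Z" "\<pi>1 \<cdot> e2 = zr X Y" "\<pi>2 \<cdot> e2 = Id C X"
      using prod_tup[OF pr _ idh[OF XY(1)], of "zr X Y"] zr[OF XY(1,2)] by blast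
    have e1m: "mono C e1" using split_mono[of e1 \<pi>1] e1 prb by simp
    have e2m: "mono C e2" using split_mono[of e2 \<pi>2] e2 prb by simp
    have v1: "valid_span C Y Z (Y, Id C Y, e1)" unfolding valid_iff using XY e1 e1m id_epi[OF XY(2)] by simp
    have v2: "valid_span C X Z (X, Id C X, e2)" unfolding valid_iff using XY e2 e2m id_epi[OF XY(1)] by simp
    have "span_class C Y Z (Y, Id C Y, e1) \<in> Qhom C Y Z" "span_class C X Z (X, Id C X, e2) \<in> Qhom C X Z"
      unfolding Qhom_def using v1 v2 by blast+
    thus ?thesis using prb by blast
  qed
  have part3: "\<exists>Z\<in>Obj C. \<exists>H\<in>Qhom C Y Z. Qcomp C X Y Z H F = Qcomp C X Y Z H G"
    if XY: "X \<in> Obj C" "Y \<in> Obj C" and FG: "F \<in> Qhom C X Y" "G \<in> Qhom C X Y" for X Y F G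
  proof -
    obtain F0 where F0: "valid_span C X Y F0" "F = span_class C X Y F0" using FG(1) unfolding Qhom_def by blast
    obtain G0 where G0: "valid_span C X Y G0" "G = span_class C X Y G0" using FG(2) unfolding Qhom_def by blast
    obtain Z \<pi>1 \<pi>2 where pr: "is_product C Y X Z \<pi>1 \<pi>2" using prod_ex[OF XY(2,1)] by blast
    note prb = prod_basic[OF pr]
    obtain e1 where e1: "e1 \<in> hom C Y Z" "\<pi>1 \<cdot> e1 = Id C Y" "\<pi>2 \<cdot> e1 = zr Y X"
      using prod_tup[OF pr idh[OF XY(2)], of "zr Y X"] zr[OF XY(2,1)] by blast
    obtain e2 where e2: "e2 \<in> hom C X Z" "\<pi>1 \<cdot> e2 = zr X Y" "\<pi>2 \<cdot> e2 = Id C X"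
      using prod_tup[OF pr _ idh[OF XY(1)], of "zr X Y"] zr[OF XY(1,2)] by blast
    have e1m: "mono C e1" using split_mono[of e1 \<pi>1] e1 prb by simp
    have v1: "valid_span C Y Z (Y, Id C Y, e1)" unfolding valid_iff using XY e1 e1m id_epi[OF XY(2)] by simp
    have H: "span_class C Y Z (Y, Id C Y, e1) \<in> Qhom C Y Z" unfolding Qhom_def using v1 by blast
    have "Qcomp C X Y Z (span_class C Y Z (Y, Id C Y, e1)) F = Qcomp C X Y Z (span_class C Y Z (Y, Id C Y, e1)) G"
      using coeq[OF F0(1) pr e1 e2] coeq[OF G0(1) pr e1 e2] F0(2) G0(2) by simp
    thus ?thesis using H prb by blast
  qed
  show ?thesis unfolding Q_filtered_def using objne part2 part3 by blast
qed


end
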